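(* Let $\mu,\lambda\in\mathbb{R}$ with $\lambda\neq0$ and $\rho=\mu/\lambda>0$. Let $\tilde\sigma\in\mathbb{C}$, $\sigma=\tilde\sigma/\lambda$, and let $\varphi\in\mathbb{B}$ satisfy $H_{\mu,\lambda}\varphi=\tilde\sigma\varphi$. Fix $a\in\mathbb{R}\setminus\{0\}$, put $\gamma=\rho+ia$ and $\varphi_a(y)=\varphi(a+iy)$ (so that $\varphi_a''(y)-(y-\gamma)\varphi_a'(y)-\frac{i\sigma}{a+iy}\varphi_a(y)=0$). Then $$\lim_{y\to-\infty}e^{-\frac12(y-\gamma)^2}\varphi_a'(y)=0,$$ and consequently, for all $y\le0$, $$\varphi_a'(y)=i\sigma\,e^{\frac12(y-\gamma)^2}\int_{-\infty}^{y}e^{-\frac12(u-\gamma)^2}\frac{\varphi_a(u)}{a+iu}\,du .$$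
   Context: The Bargmann space is $\mathbb{B}=\{\varphi:\mathbb{C}\to\mathbb{C}\text{ entire};\ \int_{\mathbb{C}}|\varphi(z)|^2e^{-|z|^2}\,dx\,dy<\infty\}$. For real $\mu,\lambda$, $H_{\mu,\lambda}=\mu z\frac{d}{dz}+i\lambda\big(z\frac{d^2}{dz^2}+z^2\frac{d}{dz}\big)$. *)

theory Defs
  imports "HOL-Complex_Analysis.Complex_Analysis"
begin

definition bargmann :: "(complex \<Rightarrow> complex) set" where
  "bargmann = {\<phi>. \<phi> holomorphic_on UNIV \<and>
      integrable lborel (\<lambda>z. (cmod (\<phi> z)) ^ 2 * exp (- ((cmod z) ^ 2)))}"

definition H_op :: "real \<Rightarrow> real \<Rightarrow> (complex \<Rightarrow> complex) \<Rightarrow> complex \<Rightarrow> complex" where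
  "H_op mu lam \<phi> z = of_real mu * z * deriv \<phi> z
     + \<i> * of_real lam * (z * deriv (deriv \<phi>) z + z ^ 2 * deriv \<phi> z)"

end

theory Submission
  imports Defs
begin


lemma lborel_complex_eq:
  "lborel = distr (lborel \<Otimes>\<^sub>M lborel) borel (\<lambda>p::real\<times>real. Complex (fst p) (snd p))"
proof (rule lborel_eqI)
  fix l u :: complex assume le: "\<And>b. b \<in> Basis \<Longrightarrow> l \<bullet> b \<le> u \<bullet> b"
  have m: "(\<lambda>p::real\<times>real. Complex (fst p) (snd p)) \<in> borel_measurable (lborel \<Otimes>\<^sub>M lborel)"
    unfolding Complex_eq by measurable
  have pre: "(\<lambda>p::real\<times>real. Complex (fst p) (snd p)) -` box l u \<inter> space (lborel \<Otimes>\<^sub>M lborel)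
      = {Re l<..<Re u} \<times> {Im l<..<Im u}"
    by (auto simp: box_def Basis_complex_def space_pair_measure)
  have "Re l \<le> Re u" "Im l \<le> Im u" using le[of 1] le[of \<i>] by (auto simp: Basis_complex_def)
  then show "emeasure (distr (lborel \<Otimes>\<^sub>M lborel) borel (\<lambda>p. Complex (fst p) (snd p))) (box l u)
      = (\<Prod>b\<in>Basis. (u - l) \<bullet> b)"
    by (simp add: emeasure_distr[OF m] pre lborel.emeasure_pair_measure_Times Basis_complex_def
        ennreal_mult)
qed simp

lemma nn_integral_complex_fst:
  fixes f :: "complex \<Rightarrow> ennreal"
  assumes [measurable]: "f \<in> borel_measurable borel"
  shows "(\<integral>\<^sup>+w. f w \<partial>lborel) = (\<integral>\<^sup>+x. \<integral>\<^sup>+y. f (Complex x y) \<partial>lborel \<partial>lborel)"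
proof -
  have m: "(\<lambda>p::real\<times>real. Complex (fst p) (snd p)) \<in> borel_measurable (lborel \<Otimes>\<^sub>M lborel)"
    unfolding Complex_eq by measurable
  have mf: "(\<lambda>p::real\<times>real. f (Complex (fst p) (snd p))) \<in> borel_measurable (lborel \<Otimes>\<^sub>M lborel)"
    using measurable_comp[OF m assms] by (simp add: comp_def)
  have "(\<integral>\<^sup>+w. f w \<partial>lborel) = (\<integral>\<^sup>+p. f (Complex (fst p) (snd p)) \<partial>(lborel \<Otimes>\<^sub>M lborel))"
    by (subst lborel_complex_eq) (simp add: nn_integral_distr[OF m])
  also have "\<dots> = (\<integral>\<^sup>+x. \<integral>\<^sup>+y. f (Complex x y) \<partial>lborel \<partial>lborel)"
    using lborel.nn_integral_fst[OF mf] by simp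
  finally show ?thesis .
qed

lemma nn_integral_complex_snd:
  fixes f :: "complex \<Rightarrow> ennreal"
  assumes [measurable]: "f \<in> borel_measurable borel"
  shows "(\<integral>\<^sup>+w. f w \<partial>lborel) = (\<integral>\<^sup>+y. \<integral>\<^sup>+x. f (Complex x y) \<partial>lborel \<partial>lborel)"
proof -
  have m: "(\<lambda>p::real\<times>real. Complex (fst p) (snd p)) \<in> borel_measurable (lborel \<Otimes>\<^sub>M lborel)"
    unfolding Complex_eq by measurable
  have mf: "(\<lambda>p::real\<times>real. f (Complex (fst p) (snd p))) \<in> borel_measurable (lborel \<Otimes>\<^sub>M lborel)"
    using measurable_comp[OF m assms] by (simp add: comp_def)
  have "(\<integral>\<^sup>+w. f w \<partial>lborel) = (\<integral>\<^sup>+p. f (Complex (fst p) (snd p)) \<partial>(lborel \<Otimes>\<^sub>M lborel))"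
    by (subst lborel_complex_eq) (simp add: nn_integral_distr[OF m])
  also have "\<dots> = (\<integral>\<^sup>+y. \<integral>\<^sup>+x. f (Complex x y) \<partial>lborel \<partial>lborel)"
    using lborel_pair.nn_integral_snd[OF mf] by (simp add: case_prod_beta)
  finally show ?thesis .
qed




lemma seg_bound:
  fixes g :: "complex \<Rightarrow> complex" and y1 y2 :: real and p d :: complex
  assumes d: "cmod d = 1"
    and cont: "continuous_on (closed_segment (p + of_real y1 * d) (p + of_real y2 * d)) g"
    and I: "(g has_contour_integral I) (linepath (p + of_real y1 * d) (p + of_real y2 * d))"
  shows "ennreal (cmod I) \<le> (\<integral>\<^sup>+y. indicator {min y1 y2..max y1 y2} y * ennreal (cmod (g (p + of_real y * d))) \<partial>lborel)"
proof (cases "y1 = y2")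
  case True
  then have "I = 0" using I by (simp add: has_contour_integral_unique)
  then show ?thesis by simp
next
  case False
  define a where "a = p + of_real y1 * d"
  define b where "b = p + of_real y2 * d"
  define c where "c = y2 - y1"
  have c0: "c \<noteq> 0" using False by (simp add: c_def)
  have lin: "linepath a b t = p + of_real (y1 + c * t) * d" for t
    by (simp add: linepath_def a_def b_def c_def algebra_simps scaleR_conv_of_real)
  have ba: "cmod (b - a) = \<bar>c\<bar>"
    by (simp add: a_def b_def c_def norm_mult d flip: of_real_diff left_diff_distrib)
  have hi: "((\<lambda>t. g (linepath a b t) * (b - a)) has_integral I) {0..1}"
    using I by (simp add: has_contour_integral_linepath a_def b_def)
  have cg: "continuous_on {0..1} (\<lambda>t. g (linepath a b t))"
    by (rule continuous_on_compose2[OF cont[folded a_def b_def] continuous_on_linepath])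
       (auto simp: linepath_image_01[symmetric])
  define N where "N t = cmod (g (linepath a b t)) * \<bar>c\<bar>" for t
  have cN: "continuous_on {0..1} N"
    unfolding N_def by (intro continuous_intros cg)
  have "cmod I = cmod (integral {0..1} (\<lambda>t. g (linepath a b t) * (b - a)))"
    by (simp only: integral_unique[OF hi])
  also have "\<dots> \<le> integral {0..1} N"
  proof (rule integral_norm_bound_integral)
    show "(\<lambda>t. g (linepath a b t) * (b - a)) integrable_on {0..1}" using hi by blast
    show "N integrable_on {0..1}" using cN integrable_continuous_interval by blast
  qed (auto simp: N_def norm_mult ba)
  finally have le1: "cmod I \<le> integral {0..1} N" .
  have hN: "(N has_integral integral {0..1} N) {0..1}"
    using cN integrable_continuous_interval by blast
  have eq1: "(\<integral>\<^sup>+t. ennreal (N t) * indicator {0..1} t \<partial>lborel) = ennreal (integral {0..1} N)"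
    by (rule nn_integral_has_integral_lebesgue'[OF _ hN]) (simp add: N_def)
  define G where "G y = indicator {min y1 y2..max y1 y2} y * ennreal (cmod (g (p + of_real y * d)))" for y
  have segeq: "(\<lambda>y. p + of_real y * d) ` {min y1 y2..max y1 y2} = closed_segment (p + of_real y1 * d) (p + of_real y2 * d)"
  proof -
    have "closed_segment (p + of_real y1 * d) (p + of_real y2 * d) = linepath a b ` {0..1}"
      by (simp add: linepath_image_01 a_def b_def)
    also have "\<dots> = (\<lambda>y. p + of_real y * d) ` ((\<lambda>t. y1 + c * t) ` {0..1})"
      by (simp add: image_image lin)
    also have "(\<lambda>t. y1 + c * t) ` {0..1} = {min y1 y2..max y1 y2}"
    proof (cases "c > 0")
      case True
      then show ?thesis using image_affinity_atLeastAtMost[of c y1 0 1] by (simp add: c_def add.commute)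
    next
      case False
      then show ?thesis using c0 image_affinity_atLeastAtMost[of c y1 0 1] by (simp add: c_def add.commute)
    qed
    finally show ?thesis by simp
  qed
  have cG: "continuous_on {min y1 y2..max y1 y2} (\<lambda>y. cmod (g (p + of_real y * d)))"
    by (intro continuous_intros continuous_on_compose2[OF cont]) (use segeq in auto)
  have mG: "G \<in> borel_measurable borel"
  proof -
    have "(\<lambda>y. indicator {min y1 y2..max y1 y2} y *\<^sub>R cmod (g (p + of_real y * d))) \<in> borel_measurable borel"
      by (rule borel_measurable_continuous_on_indicator[OF _ cG]) simp
    then have "(\<lambda>y. ennreal (indicator {min y1 y2..max y1 y2} y *\<^sub>R cmod (g (p + of_real y * d)))) \<in> borel_measurable borel"
      by (rule measurable_compose[OF _ measurable_ennreal])
    moreover have "(\<lambda>y. ennreal (indicator {min y1 y2..max y1 y2} y *\<^sub>R cmod (g (p + of_real y * d)))) = G"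
      by (auto simp: G_def fun_eq_iff split: split_indicator)
    ultimately show ?thesis by metis
  qed
  have mem: "y1 + c * t \<in> {min y1 y2..max y1 y2} \<longleftrightarrow> t \<in> {0..1}" for t
  proof (cases "c > 0")
    case True
    then have m: "min y1 y2 = y1" "max y1 y2 = y1 + c * 1" by (auto simp: c_def)
    show ?thesis unfolding m using True
      by (simp add: mult_le_cancel_left_pos zero_le_mult_iff)
  next
    case False
    then have cn: "c < 0" using c0 by simp
    then have m: "min y1 y2 = y1 + c * 1" "max y1 y2 = y1" by (auto simp: c_def)
    show ?thesis unfolding m using cn
      by (simp add: mult_le_cancel_left_neg mult_le_0_iff conj_commute)
  qed
  have ind: "indicator {min y1 y2..max y1 y2} (y1 + c * t) = (indicator {0..1} t :: ennreal)" for t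
    using mem[of t] by (simp add: indicator_def)
  have "(\<integral>\<^sup>+y. G y \<partial>lborel) = \<bar>c\<bar> * (\<integral>\<^sup>+t. G (y1 + c * t) \<partial>lborel)"
    by (rule nn_integral_real_affine[OF mG c0])
  also have "\<dots> = (\<integral>\<^sup>+t. ennreal \<bar>c\<bar> * G (y1 + c * t) \<partial>lborel)"
  proof (rule nn_integral_cmult[symmetric])
    have "(\<lambda>t::real. y1 + c * t) \<in> borel_measurable lborel" by measurable
    then show "(\<lambda>t. G (y1 + c * t)) \<in> borel_measurable lborel"
      using measurable_compose[OF _ mG] by blast
  qed
  also have "\<dots> = (\<integral>\<^sup>+t. ennreal (N t) * indicator {0..1} t \<partial>lborel)"
  proof (rule nn_integral_cong)
    fix t
    have "G (y1 + c * t) = indicator {0..1} t * ennreal (cmod (g (linepath a b t)))"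
      unfolding G_def ind lin by simp
    then show "ennreal \<bar>c\<bar> * G (y1 + c * t) = ennreal (N t) * indicator {0..1} t"
      by (simp add: N_def ennreal_mult' mult_ac)
  qed
  finally show ?thesis using eq1 le1 by (simp add: G_def ennreal_leI)
qed

lemma seg_image:
  fixes y1 y2 :: real and p d :: complex
  shows "closed_segment (p + of_real y1 * d) (p + of_real y2 * d) = (\<lambda>y. p + of_real y * d) ` {min y1 y2..max y1 y2}"
proof -
  have "closed_segment (p + of_real y1 * d) (p + of_real y2 * d) = (\<lambda>y. p + of_real y * d) ` closed_segment y1 y2"
  proof -
    have "closed_segment (p + of_real y1 * d) (p + of_real y2 * d) = (\<lambda>x. p + x) ` ((\<lambda>x. x * d) ` closed_segment (of_real y1) (of_real y2))"
    proof -
      have l: "linear (\<lambda>x::complex. x * d)"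
        using bounded_linear_mult_left bounded_linear.linear by blast
      show ?thesis
        by (simp add: closed_segment_translation closed_segment_linear_image[OF l, symmetric])
    qed
    also have "closed_segment (of_real y1) (of_real y2 :: complex) = of_real ` closed_segment y1 y2"
      by (simp add: closed_segment_linear_image[symmetric] linear_of_real)
    finally show ?thesis by (simp add: image_image)
  qed
  then show ?thesis by (simp add: closed_segment_eq_real_ivl min_def max_def)
qed

lemma side_bound:
  fixes \<phi> :: "complex \<Rightarrow> complex" and y1 y2 s r c :: real and p d z :: complex
  assumes holo: "\<phi> holomorphic_on UNIV" and s: "0 < s" and d: "cmod d = 1"
    and far: "\<And>y. y \<in> {min y1 y2..max y1 y2} \<Longrightarrow> s \<le> cmod (p + of_real y * d - z)"
    and range: "{min y1 y2..max y1 y2} \<subseteq> {c - r..c + r}"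
  defines "A \<equiv> p + of_real y1 * d" and "B \<equiv> p + of_real y2 * d"
  shows "((\<lambda>w. \<phi> w / (w - z)) has_contour_integral contour_integral (linepath A B) (\<lambda>w. \<phi> w / (w - z))) (linepath A B)"
    and "ennreal (s * cmod (contour_integral (linepath A B) (\<lambda>w. \<phi> w / (w - z))))
          \<le> (\<integral>\<^sup>+y. indicator {c - r..c + r} y * ennreal (cmod (\<phi> (p + of_real y * d))) \<partial>lborel)"
proof -
  let ?f = "\<lambda>w. \<phi> w / (w - z)"
  have img: "closed_segment A B = (\<lambda>y. p + of_real y * d) ` {min y1 y2..max y1 y2}"
    unfolding A_def B_def by (rule seg_image)
  have nz: "w \<in> closed_segment A B \<Longrightarrow> w \<noteq> z" for w
    using far s unfolding img by force
  have cphi: "continuous_on S \<phi>" for S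
    using holo by (meson holomorphic_on_imp_continuous_on continuous_on_subset subset_UNIV)
  have cf: "continuous_on (closed_segment A B) ?f"
    using nz by (intro continuous_intros cphi) auto
  show hc: "(?f has_contour_integral contour_integral (linepath A B) ?f) (linepath A B)"
    by (intro has_contour_integral_integral contour_integrable_continuous_linepath cf)
  have b1: "ennreal (cmod (contour_integral (linepath A B) ?f))
      \<le> (\<integral>\<^sup>+y. indicator {min y1 y2..max y1 y2} y * ennreal (cmod (?f (p + of_real y * d))) \<partial>lborel)"
    using seg_bound[OF d cf[unfolded A_def B_def] hc[unfolded A_def B_def]] by (simp add: A_def B_def)
  also have "\<dots> \<le> (\<integral>\<^sup>+y. ennreal (1 / s) * (indicator {c - r..c + r} y * ennreal (cmod (\<phi> (p + of_real y * d)))) \<partial>lborel)"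
  proof (rule nn_integral_mono)
    fix y
    show "indicator {min y1 y2..max y1 y2} y * ennreal (cmod (?f (p + of_real y * d)))
        \<le> ennreal (1 / s) * (indicator {c - r..c + r} y * ennreal (cmod (\<phi> (p + of_real y * d))))"
    proof (cases "y \<in> {min y1 y2..max y1 y2}")
      case True
      then have yr: "y \<in> {c - r..c + r}" using range by blast
      have "cmod (?f (p + of_real y * d)) \<le> cmod (\<phi> (p + of_real y * d)) / s"
        using far[OF True] s by (simp add: norm_divide) (intro divide_left_mono, auto intro!: mult_pos_pos)
      then have "ennreal (cmod (?f (p + of_real y * d))) \<le> ennreal (1 / s) * ennreal (cmod (\<phi> (p + of_real y * d)))"
        using s by (simp add: ennreal_mult'[symmetric] ennreal_leI)
      then show ?thesis using True yr by simp
    qed simp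
  qed
  also have "\<dots> = ennreal (1 / s) * (\<integral>\<^sup>+y. indicator {c - r..c + r} y * ennreal (cmod (\<phi> (p + of_real y * d))) \<partial>lborel)"
  proof (rule nn_integral_cmult)
    have "(\<lambda>y. \<phi> (p + of_real y * d)) \<in> borel_measurable borel"
      by (intro borel_measurable_continuous_onI continuous_intros continuous_on_compose2[OF cphi]) auto
    then show "(\<lambda>y. indicator {c - r..c + r} y * ennreal (cmod (\<phi> (p + of_real y * d)))) \<in> borel_measurable lborel"
      by measurable
  qed
  finally have "ennreal s * ennreal (cmod (contour_integral (linepath A B) ?f))
     \<le> ennreal s * (ennreal (1 / s) * (\<integral>\<^sup>+y. indicator {c - r..c + r} y * ennreal (cmod (\<phi> (p + of_real y * d))) \<partial>lborel))"
    by (rule mult_left_mono) simp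
  also have "\<dots> = (\<integral>\<^sup>+y. indicator {c - r..c + r} y * ennreal (cmod (\<phi> (p + of_real y * d))) \<partial>lborel)"
    using s by (simp add: mult.assoc[symmetric] ennreal_mult'[symmetric])
  finally show "ennreal (s * cmod (contour_integral (linepath A B) ?f))
          \<le> (\<integral>\<^sup>+y. indicator {c - r..c + r} y * ennreal (cmod (\<phi> (p + of_real y * d))) \<partial>lborel)"
    using s by (simp add: ennreal_mult')
qed




lemma square_bound:
  fixes \<phi> :: "complex \<Rightarrow> complex" and s r :: real and z :: complex
  assumes holo: "\<phi> holomorphic_on UNIV" and s: "0 < s" "s \<le> r"
  shows "ennreal (2 * pi * s * cmod (\<phi> z)) \<le>
     (\<integral>\<^sup>+y. indicator {Im z - r..Im z + r} y * ennreal (cmod (\<phi> (Complex (Re z + s) y))) \<partial>lborel) +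
     (\<integral>\<^sup>+y. indicator {Im z - r..Im z + r} y * ennreal (cmod (\<phi> (Complex (Re z - s) y))) \<partial>lborel) +
     (\<integral>\<^sup>+x. indicator {Re z - r..Re z + r} x * ennreal (cmod (\<phi> (Complex x (Im z + s)))) \<partial>lborel) +
     (\<integral>\<^sup>+x. indicator {Re z - r..Re z + r} x * ennreal (cmod (\<phi> (Complex x (Im z - s)))) \<partial>lborel)"
proof -
  define x0 y0 where "x0 = Re z" and "y0 = Im z"
  let ?f = "\<lambda>w. \<phi> w / (w - z)"
  define a1 a2 a3 a4 where "a1 = Complex (x0 - s) (y0 - s)" and "a2 = Complex (x0 + s) (y0 - s)"
     and "a3 = Complex (x0 + s) (y0 + s)" and "a4 = Complex (x0 - s) (y0 + s)"
  have e1: "a1 = Complex 0 (y0 - s) + of_real (x0 - s) * 1" "a2 = Complex 0 (y0 - s) + of_real (x0 + s) * 1"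
    by (simp_all add: a1_def a2_def complex_eq_iff)
  have e2: "a2 = Complex (x0 + s) 0 + of_real (y0 - s) * \<i>" "a3 = Complex (x0 + s) 0 + of_real (y0 + s) * \<i>"
    by (simp_all add: a2_def a3_def complex_eq_iff)
  have e3: "a3 = Complex 0 (y0 + s) + of_real (x0 + s) * 1" "a4 = Complex 0 (y0 + s) + of_real (x0 - s) * 1"
    by (simp_all add: a3_def a4_def complex_eq_iff)
  have e4: "a4 = Complex (x0 - s) 0 + of_real (y0 + s) * \<i>" "a1 = Complex (x0 - s) 0 + of_real (y0 - s) * \<i>"
    by (simp_all add: a4_def a1_def complex_eq_iff)
  have rng1: "{min (x0 - s) (x0 + s)..max (x0 - s) (x0 + s)} \<subseteq> {x0 - r..x0 + r}"
    using s by auto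
  have rng2: "{min (y0 - s) (y0 + s)..max (y0 - s) (y0 + s)} \<subseteq> {y0 - r..y0 + r}"
    using s by auto
  have rng3: "{min (x0 + s) (x0 - s)..max (x0 + s) (x0 - s)} \<subseteq> {x0 - r..x0 + r}"
    using s by auto
  have rng4: "{min (y0 + s) (y0 - s)..max (y0 + s) (y0 - s)} \<subseteq> {y0 - r..y0 + r}"
    using s by auto
  have far1: "s \<le> cmod (Complex 0 (y0 - s) + of_real y * 1 - z)" for y
    using abs_Im_le_cmod[of "Complex 0 (y0 - s) + of_real y * 1 - z"] s by (simp add: y0_def)
  have far2: "s \<le> cmod (Complex (x0 + s) 0 + of_real y * \<i> - z)" for y
    using abs_Re_le_cmod[of "Complex (x0 + s) 0 + of_real y * \<i> - z"] s by (simp add: x0_def)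
  have far3: "s \<le> cmod (Complex 0 (y0 + s) + of_real y * 1 - z)" for y
    using abs_Im_le_cmod[of "Complex 0 (y0 + s) + of_real y * 1 - z"] s by (simp add: y0_def)
  have far4: "s \<le> cmod (Complex (x0 - s) 0 + of_real y * \<i> - z)" for y
    using abs_Re_le_cmod[of "Complex (x0 - s) 0 + of_real y * \<i> - z"] s by (simp add: x0_def)
  define I1 I2 I3 I4 where "I1 = contour_integral (linepath a1 a2) ?f" and "I2 = contour_integral (linepath a2 a3) ?f"
    and "I3 = contour_integral (linepath a3 a4) ?f" and "I4 = contour_integral (linepath a4 a1) ?f"
  have q1: "Complex 0 (y0 - s) + of_real y * 1 = Complex y (y0 - s)" for y by (simp add: complex_eq_iff)
  have q2: "Complex (x0 + s) 0 + of_real y * \<i> = Complex (x0 + s) y" for y by (simp add: complex_eq_iff)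
  have q3: "Complex 0 (y0 + s) + of_real y * 1 = Complex y (y0 + s)" for y by (simp add: complex_eq_iff)
  have q4: "Complex (x0 - s) 0 + of_real y * \<i> = Complex (x0 - s) y" for y by (simp add: complex_eq_iff)
  have h1: "(?f has_contour_integral I1) (linepath a1 a2)"
    unfolding I1_def e1 by (rule side_bound(1)[OF holo s(1) _ far1 rng1]) simp
  have h2: "(?f has_contour_integral I2) (linepath a2 a3)"
    unfolding I2_def e2 by (rule side_bound(1)[OF holo s(1) _ far2 rng2]) simp
  have h3: "(?f has_contour_integral I3) (linepath a3 a4)"
    unfolding I3_def e3 by (rule side_bound(1)[OF holo s(1) _ far3 rng3]) simp
  have h4: "(?f has_contour_integral I4) (linepath a4 a1)"
    unfolding I4_def e4 by (rule side_bound(1)[OF holo s(1) _ far4 rng4]) simp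
  have b1: "ennreal (s * cmod I1) \<le> (\<integral>\<^sup>+x. indicator {x0 - r..x0 + r} x * ennreal (cmod (\<phi> (Complex x (y0 - s)))) \<partial>lborel)"
    using side_bound(2)[OF holo s(1) _ far1 rng1] unfolding I1_def e1 q1 by simp
  have b2: "ennreal (s * cmod I2) \<le> (\<integral>\<^sup>+y. indicator {y0 - r..y0 + r} y * ennreal (cmod (\<phi> (Complex (x0 + s) y))) \<partial>lborel)"
    using side_bound(2)[OF holo s(1) _ far2 rng2] unfolding I2_def e2 q2 by simp
  have b3: "ennreal (s * cmod I3) \<le> (\<integral>\<^sup>+x. indicator {x0 - r..x0 + r} x * ennreal (cmod (\<phi> (Complex x (y0 + s)))) \<partial>lborel)"
    using side_bound(2)[OF holo s(1) _ far3 rng3] unfolding I3_def e3 q3 by simp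
  have b4: "ennreal (s * cmod I4) \<le> (\<integral>\<^sup>+y. indicator {y0 - r..y0 + r} y * ennreal (cmod (\<phi> (Complex (x0 - s) y))) \<partial>lborel)"
    using side_bound(2)[OF holo s(1) _ far4 rng4] unfolding I4_def e4 q4 by simp
  have rp: "rectpath a1 a3 = linepath a1 a2 +++ linepath a2 a3 +++ linepath a3 a4 +++ linepath a4 a1"
    by (simp add: rectpath_def Let_def a1_def a2_def a3_def a4_def)
  have hall: "(?f has_contour_integral (I1 + (I2 + (I3 + I4)))) (rectpath a1 a3)"
    unfolding rp
    by (intro has_contour_integral_join h1 h2 h3 h4 valid_path_join valid_path_linepath) auto
  have zin: "z \<in> box a1 a3"
    using s by (auto simp: in_box_complex_iff a1_def a3_def x0_def y0_def)
  have le13: "Re a1 \<le> Re a3" "Im a1 \<le> Im a3" using s by (auto simp: a1_def a3_def)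
  have cau: "(?f has_contour_integral (2 * pi * \<i> * winding_number (rectpath a1 a3) z * \<phi> z)) (rectpath a1 a3)"
  proof (rule Cauchy_integral_formula_global[OF open_UNIV holo])
    show "path_image (rectpath a1 a3) \<subseteq> UNIV - {z}"
      using zin path_image_rectpath_inter_box[OF le13] by auto
  qed auto
  have "2 * pi * \<i> * \<phi> z = I1 + (I2 + (I3 + I4))"
    using has_contour_integral_unique[OF cau hall] winding_number_rectpath[OF zin] by simp
  moreover have "cmod (2 * pi * \<i> * \<phi> z) = 2 * pi * cmod (\<phi> z)"
    by (simp add: norm_mult)
  ultimately have "2 * pi * cmod (\<phi> z) = cmod (I1 + (I2 + (I3 + I4)))"
    by simp
  also have "\<dots> \<le> cmod I1 + cmod I2 + cmod I3 + cmod I4"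
    using norm_triangle_ineq[of I1 "I2+(I3+I4)"] norm_triangle_ineq[of I2 "I3+I4"] norm_triangle_ineq[of I3 I4]
    by linarith
  finally have "s * (2 * pi * cmod (\<phi> z)) \<le> s * (cmod I1 + cmod I2 + cmod I3 + cmod I4)"
    by (rule mult_left_mono) (use s in auto)
  then have "2 * pi * s * cmod (\<phi> z) \<le> s * cmod I1 + s * cmod I2 + s * cmod I3 + s * cmod I4"
    by (simp add: algebra_simps)
  then have "ennreal (2 * pi * s * cmod (\<phi> z)) \<le> ennreal (s * cmod I1) + ennreal (s * cmod I2) + ennreal (s * cmod I3) + ennreal (s * cmod I4)"
    using s by (simp add: ennreal_plus[symmetric] ennreal_leI del: ennreal_plus)
  also have "\<dots> \<le> (\<integral>\<^sup>+x. indicator {x0 - r..x0 + r} x * ennreal (cmod (\<phi> (Complex x (y0 - s)))) \<partial>lborel)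
     + (\<integral>\<^sup>+y. indicator {y0 - r..y0 + r} y * ennreal (cmod (\<phi> (Complex (x0 + s) y))) \<partial>lborel)
     + (\<integral>\<^sup>+x. indicator {x0 - r..x0 + r} x * ennreal (cmod (\<phi> (Complex x (y0 + s)))) \<partial>lborel)
     + (\<integral>\<^sup>+y. indicator {y0 - r..y0 + r} y * ennreal (cmod (\<phi> (Complex (x0 - s) y))) \<partial>lborel)"
    by (intro add_mono b1 b2 b3 b4)
  finally show ?thesis
    by (simp add: x0_def y0_def ac_simps)
qed




lemma Q_fst:
  fixes \<phi> :: "complex \<Rightarrow> complex"
  assumes c: "continuous_on UNIV \<phi>"
  shows "(\<integral>\<^sup>+x. indicator {a..b} x * (\<integral>\<^sup>+y. indicator {c..d} y * ennreal (cmod (\<phi> (Complex x y))) \<partial>lborel) \<partial>lborel)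
       = (\<integral>\<^sup>+w. indicator {w. Re w \<in> {a..b} \<and> Im w \<in> {c..d}} w * ennreal (cmod (\<phi> w)) \<partial>lborel)"
proof -
  have [measurable]: "\<phi> \<in> borel_measurable borel" using c by (rule borel_measurable_continuous_onI)
  have [measurable]: "{w::complex. Re w \<in> {a..b} \<and> Im w \<in> {c..d}} \<in> sets borel" by measurable
  have "(\<integral>\<^sup>+w. indicator {w. Re w \<in> {a..b} \<and> Im w \<in> {c..d}} w * ennreal (cmod (\<phi> w)) \<partial>lborel)
     = (\<integral>\<^sup>+x. \<integral>\<^sup>+y. indicator {w. Re w \<in> {a..b} \<and> Im w \<in> {c..d}} (Complex x y) * ennreal (cmod (\<phi> (Complex x y))) \<partial>lborel \<partial>lborel)"
    by (rule nn_integral_complex_fst) measurable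
  also have "\<dots> = (\<integral>\<^sup>+x. indicator {a..b} x * (\<integral>\<^sup>+y. indicator {c..d} y * ennreal (cmod (\<phi> (Complex x y))) \<partial>lborel) \<partial>lborel)"
  proof (rule nn_integral_cong)
    fix x :: real
    show "(\<integral>\<^sup>+y. indicator {w. Re w \<in> {a..b} \<and> Im w \<in> {c..d}} (Complex x y) * ennreal (cmod (\<phi> (Complex x y))) \<partial>lborel)
       = indicator {a..b} x * (\<integral>\<^sup>+y. indicator {c..d} y * ennreal (cmod (\<phi> (Complex x y))) \<partial>lborel)"
      by (cases "x \<in> {a..b}") (auto simp: indicator_def)
  qed
  finally show ?thesis by simp
qed

lemma Q_snd:
  fixes \<phi> :: "complex \<Rightarrow> complex"
  assumes c: "continuous_on UNIV \<phi>"
  shows "(\<integral>\<^sup>+y. indicator {c..d} y * (\<integral>\<^sup>+x. indicator {a..b} x * ennreal (cmod (\<phi> (Complex x y))) \<partial>lborel) \<partial>lborel)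
       = (\<integral>\<^sup>+w. indicator {w. Re w \<in> {a..b} \<and> Im w \<in> {c..d}} w * ennreal (cmod (\<phi> w)) \<partial>lborel)"
proof -
  have [measurable]: "\<phi> \<in> borel_measurable borel" using c by (rule borel_measurable_continuous_onI)
  have [measurable]: "{w::complex. Re w \<in> {a..b} \<and> Im w \<in> {c..d}} \<in> sets borel" by measurable
  have "(\<integral>\<^sup>+w. indicator {w. Re w \<in> {a..b} \<and> Im w \<in> {c..d}} w * ennreal (cmod (\<phi> w)) \<partial>lborel)
     = (\<integral>\<^sup>+y. \<integral>\<^sup>+x. indicator {w. Re w \<in> {a..b} \<and> Im w \<in> {c..d}} (Complex x y) * ennreal (cmod (\<phi> (Complex x y))) \<partial>lborel \<partial>lborel)"
    by (rule nn_integral_complex_snd) measurable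
  also have "\<dots> = (\<integral>\<^sup>+y. indicator {c..d} y * (\<integral>\<^sup>+x. indicator {a..b} x * ennreal (cmod (\<phi> (Complex x y))) \<partial>lborel) \<partial>lborel)"
  proof (rule nn_integral_cong)
    fix y :: real
    show "(\<integral>\<^sup>+x. indicator {w. Re w \<in> {a..b} \<and> Im w \<in> {c..d}} (Complex x y) * ennreal (cmod (\<phi> (Complex x y))) \<partial>lborel)
       = indicator {c..d} y * (\<integral>\<^sup>+x. indicator {a..b} x * ennreal (cmod (\<phi> (Complex x y))) \<partial>lborel)"
      by (cases "y \<in> {c..d}") (auto simp: indicator_def)
  qed
  finally show ?thesis by simp
qed




lemma area_bound:
  fixes \<phi> :: "complex \<Rightarrow> complex" and r :: real and z :: complex
  assumes holo: "\<phi> holomorphic_on UNIV" and r: "0 < r"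
  shows "ennreal (pi * r^2 / 2 * cmod (\<phi> z)) \<le>
     4 * (\<integral>\<^sup>+w. indicator {w. Re w \<in> {Re z - r..Re z + r} \<and> Im w \<in> {Im z - r..Im z + r}} w * ennreal (cmod (\<phi> w)) \<partial>lborel)"
proof -
  define x0 y0 where "x0 = Re z" and "y0 = Im z"
  define J where "J = (\<integral>\<^sup>+w. indicator {w. Re w \<in> {x0 - r..x0 + r} \<and> Im w \<in> {y0 - r..y0 + r}} w * ennreal (cmod (\<phi> w)) \<partial>lborel)"
  define V where "V x = (\<integral>\<^sup>+y. indicator {y0 - r..y0 + r} y * ennreal (cmod (\<phi> (Complex x y))) \<partial>lborel)" for x
  define H where "H y = (\<integral>\<^sup>+x. indicator {x0 - r..x0 + r} x * ennreal (cmod (\<phi> (Complex x y))) \<partial>lborel)" for y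
  have c: "continuous_on UNIV \<phi>" using holo by (rule holomorphic_on_imp_continuous_on)
  have [measurable]: "\<phi> \<in> borel_measurable borel" using c by (rule borel_measurable_continuous_onI)
  have mV[measurable]: "V \<in> borel_measurable borel"
  proof -
    have "(\<lambda>p::real\<times>real. indicator {y0 - r..y0 + r} (snd p) * ennreal (cmod (\<phi> (Complex (fst p) (snd p)))))
       \<in> borel_measurable (borel \<Otimes>\<^sub>M lborel)"
      unfolding Complex_eq by measurable
    from lborel.borel_measurable_nn_integral_fst[OF this] show ?thesis
      by (simp add: V_def[abs_def])
  qed
  have mH[measurable]: "H \<in> borel_measurable borel"
  proof -
    have "(\<lambda>p::real\<times>real. indicator {x0 - r..x0 + r} (snd p) * ennreal (cmod (\<phi> (Complex (snd p) (fst p)))))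
       \<in> borel_measurable (borel \<Otimes>\<^sub>M lborel)"
      unfolding Complex_eq by measurable
    from lborel.borel_measurable_nn_integral_fst[OF this] show ?thesis
      by (simp add: H_def[abs_def])
  qed
  have JV: "J = (\<integral>\<^sup>+x. indicator {x0 - r..x0 + r} x * V x \<partial>lborel)"
    unfolding J_def V_def using Q_fst[OF c] by simp
  have JH: "J = (\<integral>\<^sup>+y. indicator {y0 - r..y0 + r} y * H y \<partial>lborel)"
    unfolding J_def H_def using Q_snd[OF c] by simp
  have aff: "(\<integral>\<^sup>+s. indicator {-r..r} s * F (t + c * s) \<partial>lborel) = (\<integral>\<^sup>+x. indicator {t - r..t + r} x * F x \<partial>lborel)"
    if [measurable]: "F \<in> borel_measurable borel" and cc: "c = 1 \<or> c = -1" for F :: "real \<Rightarrow> ennreal" and t c :: real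
  proof -
    have c0: "c \<noteq> 0" using cc by auto
    have "(\<integral>\<^sup>+x. indicator {t - r..t + r} x * F x \<partial>lborel) = \<bar>c\<bar> * (\<integral>\<^sup>+s. indicator {t - r..t + r} (t + c * s) * F (t + c * s) \<partial>lborel)"
      by (rule nn_integral_real_affine[OF _ c0]) measurable
    also have "\<dots> = (\<integral>\<^sup>+s. indicator {-r..r} s * F (t + c * s) \<partial>lborel)"
      using cc by (auto intro!: nn_integral_cong simp: indicator_def)
    finally show ?thesis by simp
  qed
  have pt: "indicator {r/2..r} s * ennreal (pi * r * cmod (\<phi> z)) \<le> indicator {-r..r} s * (V (x0 + s) + V (x0 - s) + H (y0 + s) + H (y0 - s))" for s
  proof (cases "s \<in> {r/2..r}")
    case True
    then have s0: "0 < s" "s \<le> r" using r by auto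
    have "ennreal (pi * r * cmod (\<phi> z)) \<le> ennreal (2 * pi * s * cmod (\<phi> z))"
      using True by (intro ennreal_leI mult_right_mono) auto
    also have "\<dots> \<le> V (x0 + s) + V (x0 - s) + H (y0 + s) + H (y0 - s)"
      using square_bound[OF holo s0, of z] by (simp add: V_def H_def x0_def y0_def)
    finally show ?thesis using True r by (simp add: indicator_def)
  qed simp
  have "ennreal (pi * r^2 / 2 * cmod (\<phi> z)) = (\<integral>\<^sup>+s. indicator {r/2..r} s * ennreal (pi * r * cmod (\<phi> z)) \<partial>lborel)"
    using r by (simp add: nn_integral_multc ennreal_mult'[symmetric] power2_eq_square)
  also have "\<dots> \<le> (\<integral>\<^sup>+s. indicator {-r..r} s * V (x0 + s) + indicator {-r..r} s * V (x0 - s)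
        + indicator {-r..r} s * H (y0 + s) + indicator {-r..r} s * H (y0 - s) \<partial>lborel)"
    by (rule nn_integral_mono) (use pt in \<open>simp add: distrib_left\<close>)
  also have "\<dots> = (\<integral>\<^sup>+s. indicator {-r..r} s * V (x0 + s) \<partial>lborel) + (\<integral>\<^sup>+s. indicator {-r..r} s * V (x0 - s) \<partial>lborel)
        + (\<integral>\<^sup>+s. indicator {-r..r} s * H (y0 + s) \<partial>lborel) + (\<integral>\<^sup>+s. indicator {-r..r} s * H (y0 - s) \<partial>lborel)"
    by (simp add: nn_integral_add)
  also have "\<dots> = J + J + J + J"
    using aff[OF mV, of 1 x0] aff[OF mV, of "-1" x0] aff[OF mH, of 1 y0] aff[OF mH, of "-1" y0] JV JH
    by simp
  also have "\<dots> = 4 * J"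
  proof -
    have "(4::ennreal) = 1 + 1 + 1 + 1" by simp
    then show ?thesis by (simp only: distrib_right mult_1)
  qed
  finally show ?thesis by (simp add: J_def x0_def y0_def)
qed




lemma growth:
  fixes \<phi> :: "complex \<Rightarrow> complex" and r :: real
  assumes holo: "\<phi> holomorphic_on UNIV"
    and int: "integrable lborel (\<lambda>z. (cmod (\<phi> z)) ^ 2 * exp (- ((cmod z) ^ 2)))"
    and r: "0 < r"
  shows "\<exists>K. \<forall>z. cmod (\<phi> z) \<le> K * exp ((cmod z + 2 * r)^2 / 2)"
proof -
  define g where "g w = (cmod (\<phi> w)) ^ 2 * exp (- ((cmod w) ^ 2))" for w
  have c: "continuous_on UNIV \<phi>" using holo by (rule holomorphic_on_imp_continuous_on)
  have [measurable]: "\<phi> \<in> borel_measurable borel" using c by (rule borel_measurable_continuous_onI)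
  have g0: "0 \<le> g w" for w by (simp add: g_def)
  have "(\<integral>\<^sup>+w. ennreal (norm (g w)) \<partial>lborel) < \<infinity>"
    using int unfolding integrable_iff_bounded g_def by simp
  then have "(\<integral>\<^sup>+w. ennreal (g w) \<partial>lborel) < \<infinity>" using g0 by simp
  then obtain N where N: "(\<integral>\<^sup>+w. ennreal (g w) \<partial>lborel) = ennreal N" and N0: "0 \<le> N"
    by (cases "(\<integral>\<^sup>+w. ennreal (g w) \<partial>lborel)" rule: ennreal_cases) auto
  define K where "K = 4 * (N + 4 * r^2) / (pi * r^2)"
  have "cmod (\<phi> z) \<le> K * exp ((cmod z + 2 * r)^2 / 2)" for z
  proof -
    define R where "R = cmod z + 2 * r"
    define E where "E = exp (R^2 / 2)"
    define Q where "Q = {w. Re w \<in> {Re z - r..Re z + r} \<and> Im w \<in> {Im z - r..Im z + r}}"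
    have E0: "0 < E" by (simp add: E_def)
    have [measurable]: "Q \<in> sets borel" unfolding Q_def by measurable
    have inQ: "cmod w \<le> R" if "w \<in> Q" for w
    proof -
      have "cmod (w - z) \<le> \<bar>Re (w - z)\<bar> + \<bar>Im (w - z)\<bar>" by (rule cmod_le)
      also have "\<dots> \<le> 2 * r" using that by (auto simp: Q_def)
      finally show ?thesis using norm_triangle_ineq2[of w z] by (simp add: R_def)
    qed
    have pw: "cmod (\<phi> w) \<le> E / 2 * (g w + 1)" if "w \<in> Q" for w
    proof -
      define A where "A = cmod (\<phi> w) * exp (- ((cmod w)^2) / 2)"
      define B where "B = exp ((cmod w)^2 / 2)"
      have A0: "0 \<le> A" by (simp add: A_def)
      have AB: "cmod (\<phi> w) = A * B"
        by (simp add: A_def B_def mult.assoc exp_add[symmetric])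
      have BE: "B \<le> E"
        unfolding B_def E_def using inQ[OF that]
        by (simp only: exp_le_cancel_iff) (auto intro!: divide_right_mono power_mono)
      have gA: "g w = A^2"
        by (simp add: g_def A_def power_mult_distrib exp_of_nat_mult[symmetric] power2_eq_square exp_add[symmetric])
      have "A * B \<le> A * E" using A0 BE by (simp add: mult_left_mono)
      also have "\<dots> \<le> E / 2 * (A^2 + 1)"
      proof -
        have eq: "E / 2 * (A^2 + 1) - A * E = E / 2 * (A - 1)^2"
          by (simp add: power2_eq_square field_simps)
        have "0 \<le> E / 2 * (A - 1)^2" using E0 by simp
        then show ?thesis using eq by linarith
      qed
      finally show ?thesis using AB gA by simp
    qed
    have emQ: "emeasure lborel Q = ennreal (4 * r^2)"
    proof -
      have "Q = cbox (Complex (Re z - r) (Im z - r)) (Complex (Re z + r) (Im z + r))"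
        by (simp add: Q_def cbox_complex_eq)
      also have "emeasure lborel \<dots> = ennreal (4 * r^2)"
        using r by (subst emeasure_lborel_cbox) (auto simp: Basis_complex_def power2_eq_square)
      finally show ?thesis .
    qed
    have A: "ennreal (pi * r^2 / 2 * cmod (\<phi> z)) \<le> 4 * (\<integral>\<^sup>+w. indicator Q w * ennreal (cmod (\<phi> w)) \<partial>lborel)"
      using area_bound[OF holo r, of z] by (simp add: Q_def)
    have "(\<integral>\<^sup>+w. indicator Q w * ennreal (cmod (\<phi> w)) \<partial>lborel)
        \<le> (\<integral>\<^sup>+w. ennreal (E / 2) * (indicator Q w * ennreal (g w) + indicator Q w) \<partial>lborel)"
    proof (rule nn_integral_mono)
      fix w
      show "indicator Q w * ennreal (cmod (\<phi> w)) \<le> ennreal (E / 2) * (indicator Q w * ennreal (g w) + indicator Q w)"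
      proof (cases "w \<in> Q")
        case True
        have "ennreal (cmod (\<phi> w)) \<le> ennreal (E / 2 * (g w + 1))" using pw[OF True] by (rule ennreal_leI)
        moreover have "ennreal (E / 2 * (g w + 1)) = ennreal (E / 2) * (ennreal (g w) + 1)"
          using E0 g0[of w] by (subst ennreal_mult) (auto simp: ennreal_plus)
        ultimately show ?thesis using True by simp
      qed simp
    qed
    also have "\<dots> = ennreal (E / 2) * ((\<integral>\<^sup>+w. indicator Q w * ennreal (g w) \<partial>lborel) + emeasure lborel Q)"
      by (simp add: nn_integral_cmult nn_integral_add g_def)
    also have "\<dots> \<le> ennreal (E / 2) * (ennreal N + ennreal (4 * r^2))"
    proof -
      have "(\<integral>\<^sup>+w. indicator Q w * ennreal (g w) \<partial>lborel) \<le> (\<integral>\<^sup>+w. ennreal (g w) \<partial>lborel)"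
        by (rule nn_integral_mono) (simp add: indicator_def)
      then show ?thesis using N emQ by (intro mult_left_mono add_mono) auto
    qed
    finally have B: "(\<integral>\<^sup>+w. indicator Q w * ennreal (cmod (\<phi> w)) \<partial>lborel) \<le> ennreal (E / 2) * (ennreal N + ennreal (4 * r^2))" .
    have "4 * (ennreal (E / 2) * (ennreal N + ennreal (4 * r^2))) = ennreal (2 * E * (N + 4 * r^2))"
    proof -
      have e1: "ennreal N + ennreal (4*r^2) = ennreal (N + 4*r^2)" using N0 by simp
      have e2: "ennreal (E/2) * ennreal (N + 4*r^2) = ennreal (E/2 * (N + 4*r^2))"
        by (rule ennreal_mult[symmetric]) (use E0 N0 in auto)
      have e3: "4 * ennreal (E/2 * (N + 4*r^2)) = ennreal (4 * (E/2 * (N + 4*r^2)))"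
        by (subst ennreal_mult) (use E0 N0 in auto)
      show ?thesis unfolding e1 e2 e3 by (simp add: mult.assoc)
    qed
    then have "ennreal (pi * r^2 / 2 * cmod (\<phi> z)) \<le> ennreal (2 * E * (N + 4 * r^2))"
      using A B by (metis (no_types, lifting) mult_left_mono zero_le order_trans)
    then have "pi * r^2 / 2 * cmod (\<phi> z) \<le> 2 * E * (N + 4 * r^2)"
      using E0 N0 by (subst (asm) ennreal_le_iff) auto
    then have "cmod (\<phi> z) \<le> K * E"
      using r by (simp add: K_def field_simps)
    then show ?thesis by (simp add: E_def R_def)
  qed
  then show ?thesis by blast
qed




lemma deriv_growth:
  fixes \<phi> :: "complex \<Rightarrow> complex" and r \<delta> :: real
  assumes holo: "\<phi> holomorphic_on UNIV"
    and int: "integrable lborel (\<lambda>z. (cmod (\<phi> z)) ^ 2 * exp (- ((cmod z) ^ 2)))"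
    and r: "0 < r" and d: "0 < \<delta>"
  shows "\<exists>K. \<forall>z. cmod (deriv \<phi> z) \<le> K * exp ((cmod z + (\<delta> + 2 * r))^2 / 2)"
proof -
  obtain K where K: "\<And>z. cmod (\<phi> z) \<le> K * exp ((cmod z + 2 * r)^2 / 2)"
    using growth[OF holo int r] by blast
  have K0: "0 \<le> K" using order_trans[OF norm_ge_zero K[of 0]] by (simp add: zero_le_mult_iff)
  have "cmod (deriv \<phi> z) \<le> (K / \<delta>) * exp ((cmod z + (\<delta> + 2 * r))^2 / 2)" for z
  proof -
    have "cmod ((deriv ^^ 1) \<phi> z) \<le> fact 1 * (K * exp ((cmod z + (\<delta> + 2 * r))^2 / 2)) / \<delta>^1"
    proof (rule Cauchy_inequality)
      show "\<phi> holomorphic_on ball z \<delta>" using holo by (rule holomorphic_on_subset) auto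
      show "continuous_on (cball z \<delta>) \<phi>"
        using holomorphic_on_imp_continuous_on[OF holo] continuous_on_subset by blast
      fix w assume w: "cmod (z - w) = \<delta>"
      have "cmod w \<le> cmod z + \<delta>" using norm_triangle_ineq2[of w z] w by (simp add: norm_minus_commute)
      then have "(cmod w + 2 * r)^2 / 2 \<le> (cmod z + (\<delta> + 2 * r))^2 / 2"
        using r by (intro divide_right_mono power_mono) auto
      then have "exp ((cmod w + 2 * r)^2 / 2) \<le> exp ((cmod z + (\<delta> + 2 * r))^2 / 2)" by simp
      then show "cmod (\<phi> w) \<le> K * exp ((cmod z + (\<delta> + 2 * r))^2 / 2)"
        using K[of w] K0 by (meson mult_left_mono order_trans)
    qed (use d in auto)
    then show ?thesis by simp
  qed
  then show ?thesis by blast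
qed




lemma exp_set_integrable:
  fixes t y :: real
  assumes t: "0 < t"
  shows "set_integrable lborel {..y} (\<lambda>u. exp (t * u))"
proof -
  have hk: "((\<lambda>v. exp (-t* v)) has_integral (integral {0..} (\<lambda>v. exp (-t* v)))) {0..}"
    using integrable_on_exp_minus_to_infinity[OF t, of 0] by blast
  have I: "(\<integral>\<^sup>+v. ennreal (exp (-t* v)) * indicator {0..} v \<partial>lborel) = ennreal (integral {0..} (\<lambda>v. exp (-t* v)))"
    by (rule nn_integral_has_integral_lebesgue'[OF _ hk]) simp
  have "(\<integral>\<^sup>+u. ennreal (exp (t*u)) * indicator {..y} u \<partial>lborel)
      = (\<integral>\<^sup>+v. ennreal (exp (t*(y + (-1) * v))) * indicator {..y} (y + (-1) * v) \<partial>lborel)"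
    using nn_integral_real_affine[where c="-1::real" and t=y, of "\<lambda>u. ennreal (exp (t*u)) * indicator {..y} u"]
    by simp
  also have "\<dots> = (\<integral>\<^sup>+v. ennreal (exp (t*y)) * (ennreal (exp (-t* v)) * indicator {0..} v) \<partial>lborel)"
    by (intro nn_integral_cong)
       (simp add: indicator_def ennreal_mult'[symmetric] exp_add[symmetric] algebra_simps)
  also have "\<dots> = ennreal (exp (t*y)) * ennreal (integral {0..} (\<lambda>v. exp (-t* v)))"
    using I by (subst nn_integral_cmult) auto
  finally have fin: "(\<integral>\<^sup>+u. ennreal (exp (t*u)) * indicator {..y} u \<partial>lborel) < \<infinity>"
    by (simp add: ennreal_mult'[symmetric])
  show ?thesis
    unfolding set_integrable_def integrable_iff_bounded
  proof
    show "(\<lambda>u. indicat_real {..y} u *\<^sub>R exp (t * u)) \<in> borel_measurable lborel" by measurable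
    have "(\<integral>\<^sup>+u. ennreal (norm (indicat_real {..y} u *\<^sub>R exp (t * u))) \<partial>lborel)
        = (\<integral>\<^sup>+u. ennreal (exp (t*u)) * indicator {..y} u \<partial>lborel)"
      by (intro nn_integral_cong) (simp add: indicator_def)
    then show "(\<integral>\<^sup>+u. ennreal (norm (indicat_real {..y} u *\<^sub>R exp (t * u))) \<partial>lborel) < \<infinity>"
      using fin by simp
  qed
qed




lemma E_deriv:
  fixes \<gamma> x :: complex
  shows "((\<lambda>x. exp (- ((x - \<gamma>)^2) / 2)) has_field_derivative (exp (- ((x - \<gamma>)^2) / 2) * (-(x - \<gamma>)))) (at x)"
proof -
  have f: "((\<lambda>x. - ((x - \<gamma>)^2) / 2) has_field_derivative (-(x - \<gamma>))) (at x)"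
    by (auto intro!: derivative_eq_intros simp: field_simps)
  have e: "(exp has_field_derivative exp (- ((x - \<gamma>)^2) / 2)) (at (- ((x - \<gamma>)^2) / 2))"
    by (rule DERIV_exp)
  from DERIV_chain[OF e f] show ?thesis by (simp add: comp_def)
qed

lemma G_deriv:
  fixes \<phi> :: "complex \<Rightarrow> complex" and \<gamma> x :: complex and a :: real
  assumes holo: "\<phi> holomorphic_on UNIV"
  shows "((\<lambda>x. exp (- ((x - \<gamma>)^2) / 2) * (\<i> * deriv \<phi> (of_real a + \<i> * x))) has_field_derivative
     (exp (- ((x - \<gamma>)^2) / 2) * (-(x - \<gamma>) * (\<i> * deriv \<phi> (of_real a + \<i> * x)) - deriv (deriv \<phi>) (of_real a + \<i> * x)))) (at x)"
proof -
  have hd: "deriv \<phi> holomorphic_on UNIV" using holo by (rule holomorphic_deriv) simp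
  have dd: "(deriv \<phi> has_field_derivative deriv (deriv \<phi>) w) (at w)" for w
    using hd by (rule holomorphic_derivI) auto
  have c: "((\<lambda>x. deriv \<phi> (of_real a + \<i> * x)) has_field_derivative (deriv (deriv \<phi>) (of_real a + \<i> * x) * \<i>)) (at x)"
  proof -
    have l: "((\<lambda>x. of_real a + \<i> * x) has_field_derivative \<i>) (at x)"
      by (auto intro!: derivative_eq_intros)
    from DERIV_chain[OF dd l] show ?thesis by (simp add: comp_def)
  qed
  show ?thesis
    by (rule derivative_eq_intros E_deriv c refl)+ (simp add: algebra_simps)
qed

lemma phia_vd:
  fixes \<phi> :: "complex \<Rightarrow> complex" and a y :: real
  assumes holo: "\<phi> holomorphic_on UNIV"
  shows "((\<lambda>y. \<phi> (of_real a + \<i> * of_real y)) has_vector_derivative (\<i> * deriv \<phi> (of_real a + \<i> * of_real y))) (at y)"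
proof -
  have d: "(\<phi> has_field_derivative deriv \<phi> w) (at w)" for w
    using holo by (rule holomorphic_derivI) auto
  have "((\<lambda>x. \<phi> (of_real a + \<i> * x)) has_field_derivative (deriv \<phi> (of_real a + \<i> * of_real y) * \<i>)) (at (of_real y))"
  proof -
    have l: "((\<lambda>x. of_real a + \<i> * x) has_field_derivative \<i>) (at (of_real y))"
      by (auto intro!: derivative_eq_intros)
    from DERIV_chain[OF d l] show ?thesis by (simp add: comp_def)
  qed
  from has_vector_derivative_real_field[OF this] show ?thesis by (simp add: mult.commute)
qed




lemma ode_identity:
  fixes mu lam a y :: real and \<sigma>t p0 p1 p2 w :: complex
  assumes lam: "lam \<noteq> 0" and a: "a \<noteq> 0"
    and w: "w = of_real a + \<i> * of_real y"
    and H: "of_real mu * w * p1 + \<i> * of_real lam * (w * p2 + w ^ 2 * p1) = \<sigma>t * p0"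
  shows "-(of_real y - (of_real (mu / lam) + \<i> * of_real a)) * (\<i> * p1) - p2 = \<i> * (\<sigma>t / of_real lam) * (p0 / w)"
proof -
  have w0: "w \<noteq> 0" using a w by (auto simp: complex_eq_iff)
  have l0: "(of_real lam :: complex) \<noteq> 0" using lam by simp
  have p2: "p2 = (\<sigma>t * p0 - of_real mu * w * p1 - \<i> * of_real lam * w^2 * p1) / (\<i> * of_real lam * w)"
    using H w0 l0 by (simp add: field_simps)
  have yy: "of_real y = - \<i> * (w - of_real a)" using w by (simp add: algebra_simps)
  show ?thesis
    unfolding p2 yy using w0 l0
    by (simp add: field_simps power2_eq_square)
qed




lemma lin_core: fixes P Y R a2 y2 cA cy c2 \<rho>y \<rho>2 :: real
  assumes "P \<le> a2 + y2 + 2 * cA - 2 * cy + c2" "Y = y2 - 2 * \<rho>y + \<rho>2" "R = \<rho>y - cy" "0 \<le> \<rho>2"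
  shows "- (Y - a2) / 2 + P / 2 \<le> a2 + cA + c2 / 2 + R"
  using assms by (simp add: field_simps)
lemma lin_aux: fixes m c a y \<rho> A :: real
  assumes "(m + c)^2 \<le> a^2 + y^2 + 2 * c * (A - y) + c^2"
  shows "- ((y - \<rho>)^2 - a^2) / 2 + (m + c)^2 / 2 \<le> a^2 + c * A + c^2 / 2 + (\<rho> - c) * y"
proof (rule lin_core)
  show "(m + c)^2 \<le> a^2 + y^2 + 2 * (c * A) - 2 * (c * y) + c^2" using assms by (simp add: algebra_simps)
  show "(y - \<rho>)^2 = y^2 - 2 * (\<rho> * y) + \<rho>^2" by (simp add: power2_eq_square algebra_simps)
  show "(\<rho> - c) * y = \<rho> * y - c * y" by (simp add: algebra_simps)
qed simp

lemma exp_bound: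
  fixes a y \<rho> c :: real
  assumes y: "y \<le> 0" and c: "0 \<le> c"
  shows "cmod (exp (- ((of_real y - (of_real \<rho> + \<i> * of_real a))^2) / 2)) * exp ((cmod (of_real a + \<i> * of_real y) + c)^2 / 2)
     \<le> exp (a^2 + c * \<bar>a\<bar> + c^2 / 2) * exp ((\<rho> - c) * y)"
proof -
  define m where "m = cmod (of_real a + \<i> * of_real y)"
  have m2: "m^2 = a^2 + y^2" unfolding m_def by (simp add: cmod_power2)
  have mle: "m \<le> \<bar>a\<bar> - y"
    unfolding m_def using cmod_le[of "of_real a + \<i> * of_real y"] y by simp
  have m0: "0 \<le> m" by (simp add: m_def)
  have re: "Re (- ((of_real y - (of_real \<rho> + \<i> * of_real a))^2) / 2) = - ((y - \<rho>)^2 - a^2) / 2"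
    by (simp add: power2_eq_square algebra_simps)
  have nE: "cmod (exp (- ((of_real y - (of_real \<rho> + \<i> * of_real a))^2) / 2)) = exp (- ((y - \<rho>)^2 - a^2) / 2)"
    by (simp only: norm_exp_eq_Re re)
  have ineq: "- ((y - \<rho>)^2 - a^2) / 2 + (m + c)^2 / 2 \<le> (a^2 + c * \<bar>a\<bar> + c^2 / 2) + (\<rho> - c) * y"
  proof (rule lin_aux)
    have "(m + c)^2 = m^2 + 2 * c * m + c^2" by (simp add: power2_eq_square algebra_simps)
    also have "\<dots> \<le> a^2 + y^2 + 2 * c * (\<bar>a\<bar> - y) + c^2"
      using m2 mle c by (simp add: mult_left_mono)
    finally show "(m + c)^2 \<le> a^2 + y^2 + 2 * c * (\<bar>a\<bar> - y) + c^2" .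
  qed
  have "cmod (exp (- ((of_real y - (of_real \<rho> + \<i> * of_real a))^2) / 2)) * exp ((m + c)^2 / 2)
      = exp (- ((y - \<rho>)^2 - a^2) / 2 + (m + c)^2 / 2)"
    unfolding nE by (simp add: exp_add)
  also have "\<dots> \<le> exp ((a^2 + c * \<bar>a\<bar> + c^2 / 2) + (\<rho> - c) * y)"
    using ineq by simp
  also have "\<dots> = exp (a^2 + c * \<bar>a\<bar> + c^2 / 2) * exp ((\<rho> - c) * y)"
    by (simp add: exp_add)
  finally show ?thesis by (simp add: m_def)
qed




lemma exp_tendsto_at_bot:
  fixes t :: real assumes t: "0 < t"
  shows "((\<lambda>y. exp (t * y)) \<longlongrightarrow> 0) at_bot"
proof -
  have "filterlim (\<lambda>y. t * y) at_bot at_bot"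
    by (rule filterlim_tendsto_pos_mult_at_bot[OF tendsto_const t filterlim_ident])
  from filterlim_compose[OF exp_at_bot this] show ?thesis .
qed

lemma main5p3:
  fixes mu lam a :: real and \<sigma>t :: complex and \<phi> :: "complex \<Rightarrow> complex"
  assumes lam: "lam \<noteq> 0" and rho: "mu / lam > 0"
    and holo: "\<phi> holomorphic_on UNIV"
    and int: "integrable lborel (\<lambda>z. (cmod (\<phi> z)) ^ 2 * exp (- ((cmod z) ^ 2)))"
    and H: "\<And>z. H_op mu lam \<phi> z = \<sigma>t * \<phi> z"
    and a: "a \<noteq> 0"
  defines "\<rho> \<equiv> mu / lam" and "\<sigma> \<equiv> \<sigma>t / of_real lam" and "\<gamma> \<equiv> of_real (mu / lam) + \<i> * of_real a"
    and "\<phi>a \<equiv> (\<lambda>y::real. \<phi> (of_real a + \<i> * of_real y))"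
    and "\<phi>a' \<equiv> (\<lambda>y::real. vector_derivative (\<lambda>y::real. \<phi> (of_real a + \<i> * of_real y)) (at y))"
  shows "((\<lambda>y. exp (- ((of_real y - \<gamma>) ^ 2) / 2) * \<phi>a' y) \<longlongrightarrow> 0) at_bot"
    and "\<forall>y\<le>0. \<phi>a' y = \<i> * \<sigma> * exp ((of_real y - \<gamma>) ^ 2 / 2) *
                 (LBINT u:{..y}. exp (- ((of_real u - \<gamma>) ^ 2) / 2) * \<phi>a u / (of_real a + \<i> * of_real u))"
proof -
  define w where "w y = of_real a + \<i> * of_real y" for y :: real
  define E where "E y = exp (- ((of_real y - \<gamma>) ^ 2) / 2)" for y :: real
  define F where "F y = E y * \<phi>a' y" for y
  define h where "h u = E u * \<phi>a u / w u" for u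
  have w0: "w y \<noteq> 0" for y using a by (auto simp: w_def complex_eq_iff)
  have wa: "\<bar>a\<bar> \<le> cmod (w y)" for y using abs_Re_le_cmod[of "w y"] by (simp add: w_def)
  have vd: "\<phi>a' y = \<i> * deriv \<phi> (w y)" for y
    unfolding \<phi>a'_def \<phi>a_def w_def by (rule vector_derivative_at[OF phia_vd[OF holo]])
  have cphi: "continuous_on UNIV \<phi>" using holo by (rule holomorphic_on_imp_continuous_on)
  have \<rho>0: "0 < \<rho>" using rho by (simp add: \<rho>_def)
  define c where "c = \<rho> / 4"
  define t where "t = \<rho> - c"
  define C1 where "C1 = a^2 + c * \<bar>a\<bar> + c^2 / 2"
  have c0: "0 < c" and t0: "0 < t" using \<rho>0 by (auto simp: c_def t_def)
  obtain K1 where K1: "\<And>z. cmod (deriv \<phi> z) \<le> K1 * exp ((cmod z + (\<rho>/12 + 2 * (\<rho>/12)))^2 / 2)"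
    using deriv_growth[OF holo int, of "\<rho>/12" "\<rho>/12"] \<rho>0 by auto
  have K1': "cmod (deriv \<phi> z) \<le> K1 * exp ((cmod z + c)^2 / 2)" for z
  proof -
    have "\<rho>/12 + 2 * (\<rho>/12) = c" by (simp add: c_def)
    then show ?thesis using K1[of z] by simp
  qed
  have K10: "0 \<le> K1" using order_trans[OF norm_ge_zero K1'[of 0]] by (simp add: zero_le_mult_iff)
  obtain K0 where K0: "\<And>z. cmod (\<phi> z) \<le> K0 * exp ((cmod z + 2 * (\<rho>/12))^2 / 2)"
    using growth[OF holo int, of "\<rho>/12"] \<rho>0 by auto
  have K00: "0 \<le> K0" using order_trans[OF norm_ge_zero K0[of 0]] by (simp add: zero_le_mult_iff)
  have K0': "cmod (\<phi> z) \<le> K0 * exp ((cmod z + c)^2 / 2)" for z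
  proof -
    have "(cmod z + 2 * (\<rho>/12))^2 / 2 \<le> (cmod z + c)^2 / 2"
      using \<rho>0 by (intro divide_right_mono power_mono) (auto simp: c_def)
    then have "exp ((cmod z + 2 * (\<rho>/12))^2 / 2) \<le> exp ((cmod z + c)^2 / 2)" by simp
    then show ?thesis using K0[of z] K00 by (meson mult_left_mono order_trans)
  qed
  have EB: "cmod (E y) * exp ((cmod (w y) + c)^2 / 2) \<le> exp C1 * exp (t * y)" if "y \<le> 0" for y
    using exp_bound[OF that less_imp_le[OF c0], of \<rho> a]
    by (simp add: E_def w_def C1_def t_def \<gamma>_def \<rho>_def mult.commute)
  have bound1: "norm (F y) \<le> K1 * exp C1 * exp (t * y)" if "y \<le> 0" for y
  proof -
    have "norm (F y) = cmod (E y) * cmod (deriv \<phi> (w y))"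
      by (simp add: F_def vd norm_mult)
    also have "\<dots> \<le> cmod (E y) * (K1 * exp ((cmod (w y) + c)^2 / 2))"
      by (rule mult_left_mono[OF K1']) simp
    also have "\<dots> = K1 * (cmod (E y) * exp ((cmod (w y) + c)^2 / 2))" by simp
    also have "\<dots> \<le> K1 * (exp C1 * exp (t * y))"
      by (rule mult_left_mono[OF EB[OF that] K10])
    finally show ?thesis by simp
  qed
  have lim: "(F \<longlongrightarrow> 0) at_bot"
  proof (rule Lim_null_comparison)
    show "\<forall>\<^sub>F y in at_bot. norm (F y) \<le> K1 * exp C1 * exp (t * y)"
      unfolding eventually_at_bot_linorder using bound1 by blast
    show "((\<lambda>y. K1 * exp C1 * exp (t * y)) \<longlongrightarrow> 0) at_bot"
      using tendsto_mult_right_zero[OF exp_tendsto_at_bot[OF t0]] by simp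
  qed
  have Feq: "(\<lambda>y. exp (- ((of_real y - \<gamma>) ^ 2) / 2) * \<phi>a' y) = F"
    by (rule ext) (simp add: F_def E_def)
  show "((\<lambda>y. exp (- ((of_real y - \<gamma>) ^ 2) / 2) * \<phi>a' y) \<longlongrightarrow> 0) at_bot"
    by (subst Feq) (rule lim)
  show "\<forall>y\<le>0. \<phi>a' y = \<i> * \<sigma> * exp ((of_real y - \<gamma>) ^ 2 / 2) *
                 (LBINT u:{..y}. exp (- ((of_real u - \<gamma>) ^ 2) / 2) * \<phi>a u / (of_real a + \<i> * of_real u))"
  proof (intro allI impI)
    fix y :: real assume y: "y \<le> 0"
    define g where "g u = \<i> * \<sigma> * h u" for u
    have cw: "continuous_on S (\<lambda>u. \<phi> (w u))" for S
      unfolding w_def by (intro continuous_on_compose2[OF cphi] continuous_intros) auto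
    have ch: "continuous_on S h" for S
      unfolding h_def E_def \<phi>a_def using w0 cw[of S]
      by (intro continuous_intros) (auto simp: w_def intro!: continuous_intros)
    have cg: "continuous_on S g" for S
      unfolding g_def by (intro continuous_intros ch)
    have hb: "norm (h u) \<le> K0 * exp C1 / \<bar>a\<bar> * exp (t * u)" if "u \<le> 0" for u
    proof -
      have "norm (h u) = cmod (E u) * cmod (\<phi> (w u)) / cmod (w u)"
        by (simp add: h_def \<phi>a_def w_def norm_mult norm_divide)
      also have "\<dots> \<le> cmod (E u) * cmod (\<phi> (w u)) / \<bar>a\<bar>"
        using wa[of u] a w0[of u] by (intro divide_left_mono) (auto intro!: mult_pos_pos)
      also have "cmod (E u) * cmod (\<phi> (w u)) \<le> cmod (E u) * (K0 * exp ((cmod (w u) + c)^2 / 2))"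
        by (rule mult_left_mono[OF K0']) simp
      also have "\<dots> = K0 * (cmod (E u) * exp ((cmod (w u) + c)^2 / 2))" by simp
      also have "\<dots> \<le> K0 * (exp C1 * exp (t * u))"
        by (rule mult_left_mono[OF EB[OF that] K00])
      finally show ?thesis by (simp add: divide_right_mono mult_ac)
    qed
    have hint: "set_integrable lborel {..y} h"
    proof (rule set_integrable_bound)
      show "set_integrable lborel {..y} (\<lambda>u. K0 * exp C1 / \<bar>a\<bar> * exp (t * u))"
        using exp_set_integrable[OF t0, of y] by (rule set_integrable_mult_right)
      have "h \<in> borel_measurable borel" by (rule borel_measurable_continuous_onI[OF ch])
      then show "set_borel_measurable lborel {..y} h"
        unfolding set_borel_measurable_def by measurable
      show "AE u in lborel. u \<in> {..y} \<longrightarrow> norm (h u) \<le> norm (K0 * exp C1 / \<bar>a\<bar> * exp (t * u))"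
      proof (rule AE_I2, intro impI)
        fix u assume "u \<in> {..y}"
        then have "u \<le> 0" using y by simp
        then show "norm (h u) \<le> norm (K0 * exp C1 / \<bar>a\<bar> * exp (t * u))"
          using hb[of u] K00 by simp
      qed
    qed
    have gint: "set_integrable lborel {..y} g"
      unfolding g_def using hint by (rule set_integrable_mult_right)
    define G where "G x = exp (- ((x - \<gamma>)^2) / 2) * (\<i> * deriv \<phi> (of_real a + \<i> * x))" for x
    have FG: "F = (\<lambda>u. G (of_real u))"
      by (rule ext) (simp add: F_def G_def E_def vd w_def)
    have Fd: "(F has_vector_derivative g x) (at x within S)" for x S
    proof -
      have "(G has_field_derivative (exp (- ((of_real x - \<gamma>)^2) / 2) * (-(of_real x - \<gamma>) * (\<i> * deriv \<phi> (of_real a + \<i> * of_real x)) - deriv (deriv \<phi>) (of_real a + \<i> * of_real x)))) (at (of_real x))"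
        unfolding G_def by (rule G_deriv[OF holo])
      moreover have "-(of_real x - \<gamma>) * (\<i> * deriv \<phi> (of_real a + \<i> * of_real x)) - deriv (deriv \<phi>) (of_real a + \<i> * of_real x)
           = \<i> * \<sigma> * (\<phi> (of_real a + \<i> * of_real x) / (of_real a + \<i> * of_real x))"
        unfolding \<gamma>_def \<sigma>_def
        by (rule ode_identity[OF lam a refl]) (use H[of "of_real a + \<i> * of_real x"] in \<open>simp add: H_op_def\<close>)
      ultimately have "(G has_field_derivative g x) (at (of_real x))"
        by (simp add: g_def h_def E_def \<phi>a_def w_def mult_ac)
      from has_vector_derivative_real_field[OF this] show ?thesis by (simp add: FG)
    qed
    have ftc: "set_lebesgue_integral lborel {s..y} g = F y - F s" if "s \<le> y" for s
      unfolding set_lebesgue_integral_def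
      by (rule integral_FTC_atLeastAtMost[OF that]) (auto intro: Fd cg)
    have t1: "((\<lambda>s. set_lebesgue_integral lborel {s..y} g) \<longlongrightarrow> set_lebesgue_integral lborel {..y} g) at_bot"
      by (rule tendsto_set_lebesgue_integral_at_bot[OF _ gint]) simp
    have t2: "((\<lambda>s. set_lebesgue_integral lborel {s..y} g) \<longlongrightarrow> F y - 0) at_bot"
    proof -
      have "((\<lambda>s. F y - F s) \<longlongrightarrow> F y - 0) at_bot"
        by (intro tendsto_intros lim)
      moreover have "\<forall>\<^sub>F s in at_bot. F y - F s = set_lebesgue_integral lborel {s..y} g"
        unfolding eventually_at_bot_linorder by (intro exI[of _ y] allI impI) (simp add: ftc)
      ultimately show ?thesis by (rule Lim_transform_eventually)
    qed
    have Iy: "set_lebesgue_integral lborel {..y} g = F y"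
      using tendsto_unique[OF trivial_limit_at_bot_linorder t1 t2] by simp
    have EE: "exp ((of_real y - \<gamma>) ^ 2 / 2) * E y = 1"
      by (simp add: E_def exp_add[symmetric])
    have "\<i> * \<sigma> * exp ((of_real y - \<gamma>) ^ 2 / 2) * (LBINT u:{..y}. h u)
        = exp ((of_real y - \<gamma>) ^ 2 / 2) * set_lebesgue_integral lborel {..y} g"
    proof -
      have gI: "set_lebesgue_integral lborel {..y} g = \<i> * \<sigma> * set_lebesgue_integral lborel {..y} h"
        unfolding g_def by (rule set_integral_mult_right)
      show ?thesis by (simp add: gI mult_ac)
    qed
    also have "\<dots> = \<phi>a' y"
      unfolding Iy F_def using EE by (simp add: mult.assoc[symmetric])
    finally show "\<phi>a' y = \<i> * \<sigma> * exp ((of_real y - \<gamma>) ^ 2 / 2) *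
                 (LBINT u:{..y}. exp (- ((of_real u - \<gamma>) ^ 2) / 2) * \<phi>a u / (of_real a + \<i> * of_real u))"
      by (simp add: h_def E_def w_def)
  qed
qed



theorem theorem5p3:
  fixes mu lam a :: real and \<sigma>t :: complex and \<phi> :: "complex \<Rightarrow> complex"
  assumes "lam \<noteq> 0"
    and "mu / lam > 0"
    and "\<phi> \<in> bargmann"
    and "\<And>z. H_op mu lam \<phi> z = \<sigma>t * \<phi> z"
    and "a \<noteq> 0"
  shows "let \<rho> = mu / lam; \<sigma> = \<sigma>t / of_real lam; \<gamma> = of_real \<rho> + \<i> * of_real a;
             \<phi>a = (\<lambda>y::real. \<phi> (of_real a + \<i> * of_real y));
             \<phi>a' = (\<lambda>y::real. vector_derivative \<phi>a (at y))
         in ((\<lambda>y. exp (- ((of_real y - \<gamma>) ^ 2) / 2) * \<phi>a' y) \<longlongrightarrow> 0) at_bot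
          \<and> (\<forall>y\<le>0. \<phi>a' y = \<i> * \<sigma> * exp ((of_real y - \<gamma>) ^ 2 / 2) *
                 (LBINT u:{..y}. exp (- ((of_real u - \<gamma>) ^ 2) / 2) * \<phi>a u / (of_real a + \<i> * of_real u)))"
proof -
  have holo: "\<phi> holomorphic_on UNIV"
    and int: "integrable lborel (\<lambda>z. (cmod (\<phi> z)) ^ 2 * exp (- ((cmod z) ^ 2)))"
    using assms(3) by (auto simp: bargmann_def)
  note m1 = main5p3(1)[OF assms(1,2) holo int assms(4) assms(5)]
  note m2 = main5p3(2)[OF assms(1,2) holo int assms(4) assms(5)]
  show ?thesis unfolding Let_def using m1 m2 by blast
qed

end
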